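(* Let $n\geq 4$ and let $\mathcal{H}_{2n}$ be the collection of subsets of $\{1,\dots,2n\}$ of the form $\{1,2,2k-1,2k\}$ for $2\le k\le n$, or $\{2k-1,2k,2k+1,2k+2\}$ for $2\le k\le n-1$. Then the collection of all subsets $B\subset\{1,\dots,2n\}$ with $|B|=4$ and $B\notin\mathcal{H}_{2n}$ is the set of bases of a (rank-four) matroid on $\{1,\dots,2n\}$ (called the $2n$-Vámos matroid $V_{2n}$).
   Context: A matroid on a finite set $E$ is given by a nonempty collection of independent sets closed under taking subsets and satisfying the exchange axiom; its bases are the maximal independent sets. *)

theory Defs
  imports Main
begin

definition matroid :: "'a set \<Rightarrow> 'a set set \<Rightarrow> bool" where
  "matroid E \<I> \<longleftrightarrow> finite E \<and> (\<forall>X\<in>\<I>. X \<subseteq> E) \<and> \<I> \<noteq> {} \<and>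
     (\<forall>X Y. X \<in> \<I> \<and> Y \<subseteq> X \<longrightarrow> Y \<in> \<I>) \<and>
     (\<forall>X Y. X \<in> \<I> \<and> Y \<in> \<I> \<and> card X < card Y \<longrightarrow> (\<exists>y\<in>Y - X. insert y X \<in> \<I>))"

definition matroid_bases :: "'a set set \<Rightarrow> 'a set set" where
  "matroid_bases \<I> = {B \<in> \<I>. \<forall>X\<in>\<I>. B \<subseteq> X \<longrightarrow> X = B}"

definition vamos_H :: "nat \<Rightarrow> nat set set" where
  "vamos_H n = {{1, 2, 2*k - 1, 2*k} | k. 2 \<le> k \<and> k \<le> n} \<union>
               {{2*k - 1, 2*k, 2*k + 1, 2*k + 2} | k. 2 \<le> k \<and> k \<le> n - 1}"

end

theory Submission
  imports Defs
begin

lemma vH_cases: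
  assumes "A \<in> vamos_H n"
  obtains k where "2 \<le> k" "A = {1,2,2*k-1,2*k}"
  | k where "2 \<le> k" "A = {2*k-1,2*k,2*k+1,2*k+2}" "k \<le> n - 1"
  using assms unfolding vamos_H_def by blast

lemma vH_ord:
  assumes "A \<in> vamos_H n" "B \<in> vamos_H n" "(a::nat) < b" "b < c"
    "a \<in> A" "b \<in> A" "c \<in> A" "a \<in> B" "b \<in> B" "c \<in> B"
  shows "A = B"
proof -
  have A0: "\<forall>x\<in>A. x \<ge> 1" using assms(1) by (cases rule: vH_cases) auto
  hence "b \<ge> 2" "c \<ge> 3" using assms(3-7) by auto
  show ?thesis
  using assms(1)
  proof (cases rule: vH_cases)
    case (1 k)
    note k = this
    show ?thesis using assms(2)
    proof (cases rule: vH_cases)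
      case (1 j)
      have "c = 2*k-1 \<or> c = 2*k" using k assms(7) \<open>c\<ge>3\<close> by auto
      moreover have "c = 2*j-1 \<or> c = 2*j" using 1 assms(10) \<open>c\<ge>3\<close> by auto
      ultimately have "k = j" using k 1 by linarith
      thus ?thesis using k 1 by simp
    next
      case (2 j)
      have "a \<ge> 2*j-1" using 2 assms(8) by auto
      hence "b \<ge> 3" "c \<ge> 4" using 2 assms(3,4) by linarith+
      have "b = 2*k-1 \<or> b = 2*k" using k assms(6) \<open>b\<ge>3\<close> by auto
      moreover have "c = 2*k-1 \<or> c = 2*k" using k assms(7) \<open>c\<ge>3\<close> by auto
      moreover have "a \<ge> 3" using \<open>a \<ge> 2*j-1\<close> 2 by linarith
      moreover have "a = 2*k-1 \<or> a = 2*k" using k assms(5) \<open>a\<ge>3\<close> by auto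
      ultimately show ?thesis using assms(3,4) by linarith
    qed
  next
    case (2 k)
    note k = this
    have ak: "2*k-1 \<le> a" "c \<le> 2*k+2" using k assms(5,7) by auto
    show ?thesis using assms(2)
    proof (cases rule: vH_cases)
      case (1 j)
      have "a \<ge> 3" using ak k by linarith
      hence "b \<ge> 3" using assms(3) by linarith
      have "b = 2*j-1 \<or> b = 2*j" using 1 assms(9) \<open>b\<ge>3\<close> by auto
      moreover have "c = 2*j-1 \<or> c = 2*j" using 1 assms(10) \<open>c\<ge>3\<close> by auto
      moreover have "a = 2*j-1 \<or> a = 2*j" using 1 assms(8) \<open>a\<ge>3\<close> by auto
      ultimately show ?thesis using assms(3,4) by linarith
    next
      case (2 j)
      have "2*j-1 \<le> a" "c \<le> 2*j+2" using 2 assms(8,10) by auto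
      hence "k = j" using ak k 2 assms(3,4) by linarith
      thus ?thesis using k 2 by simp
    qed
  qed
qed


lemma vH_dist:
  assumes "A \<in> vamos_H n" "B \<in> vamos_H n" "card X = 3" "X \<subseteq> A" "X \<subseteq> B"
  shows "A = B"
proof -
  obtain x y z where X: "X = {x,y,z}" "x \<noteq> y" "y \<noteq> z" "x \<noteq> z"
    using assms(3) unfolding card_3_iff by blast
  have m: "x \<in> A" "y \<in> A" "z \<in> A" "x \<in> B" "y \<in> B" "z \<in> B" using X assms(4,5) by auto
  have o: "A = B" if "a < b" "b < c" "a \<in> {x,y,z}" "b \<in> {x,y,z}" "c \<in> {x,y,z}" for a b c
  proof -
    have "a \<in> A" "b \<in> A" "c \<in> A" "a \<in> B" "b \<in> B" "c \<in> B" using that m by auto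
    thus ?thesis using vH_ord[OF assms(1,2) that(1,2)] by blast
  qed
  have l1: "x < y \<or> y < x" using X by auto
  have l2: "x < z \<or> z < x" using X by auto
  have l3: "y < z \<or> z < y" using X by auto
  show ?thesis
    using l1 l2 l3
  proof (elim disjE)
  qed (simp_all add: o[of x y z, simplified] o[of x z y, simplified] o[of y x z, simplified]
         o[of y z x, simplified] o[of z x y, simplified] o[of z y x, simplified])
qed

lemma card4: "card {m::nat, m+1, m+2, m+3} = 4" by simp

lemma vH_card: "A \<in> vamos_H n \<Longrightarrow> card A = 4"
proof (erule vH_cases)
  fix k assume "2 \<le> k" "A = {1,2,2*k-1,2*k}" thus "card A = 4" by auto
next
  fix k assume k: "2 \<le> k" "A = {2*k-1,2*k,2*k+1,2*k+2}"
  hence "A = {2*k-1, (2*k-1)+1, (2*k-1)+2, (2*k-1)+3}" by simp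
  thus "card A = 4" using card4 by metis
qed

lemma sparse_paving:
  fixes E :: "'a set" and H :: "'a set set"
  assumes fin: "finite E"
    and H4: "\<And>A. A \<in> H \<Longrightarrow> card A = 4"
    and Hsp: "\<And>A B X. A \<in> H \<Longrightarrow> B \<in> H \<Longrightarrow> card X = 3 \<Longrightarrow> X \<subseteq> A \<Longrightarrow> X \<subseteq> B \<Longrightarrow> A = B"
    and Z: "Z \<subseteq> E" "card Z = 4" "Z \<notin> H"
  defines "I \<equiv> {X. X \<subseteq> E \<and> card X \<le> 4 \<and> X \<notin> H}"
  shows "matroid E I \<and> matroid_bases I = {B. B \<subseteq> E \<and> card B = 4 \<and> B \<notin> H}"
proof -
  have exch: "\<exists>y\<in>Y - X. insert y X \<in> I" if XI: "X \<in> I" and YI: "Y \<in> I" and lt: "card X < card Y" for X Y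
  proof -
    have fX: "finite X" and fY: "finite Y" using XI YI fin unfolding I_def by (auto intro: finite_subset)
    have ne: "Y - X \<noteq> {}"
    proof
      assume "Y - X = {}" hence "Y \<subseteq> X" by blast
      hence "card Y \<le> card X" using card_mono fX by blast
      thus False using lt by simp
    qed
    have cX: "card X \<le> 3" using lt YI unfolding I_def by simp
    show ?thesis
    proof (cases "card X \<le> 2")
      case True
      obtain y where y: "y \<in> Y - X" using ne by blast
      have "card (insert y X) \<le> card X + 1" using fX by (simp add: card_insert_if)
      hence "card (insert y X) \<le> 3" using True by linarith
      have "insert y X \<notin> H"
      proof
        assume "insert y X \<in> H"
        hence "card (insert y X) = 4" by (rule H4)
        thus False using \<open>card (insert y X) \<le> 3\<close> by simp
      qed
      moreover have "insert y X \<subseteq> E" using y XI YI unfolding I_def by auto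
      ultimately show ?thesis using y \<open>card (insert y X) \<le> 3\<close> unfolding I_def by auto
    next
      case False
      hence c3: "card X = 3" using cX by simp
      hence c4: "card Y = 4" using lt YI unfolding I_def by simp
      show ?thesis
      proof (rule ccontr)
        assume nex: "\<not> ?thesis"
        have inH: "insert y X \<in> H" if "y \<in> Y - X" for y
        proof -
          have "card (insert y X) = 4" using that fX c3 by simp
          moreover have "insert y X \<subseteq> E" using that XI YI unfolding I_def by auto
          ultimately show ?thesis using nex that unfolding I_def by auto
        qed
        obtain y where y: "y \<in> Y - X" using ne by blast
        show False
        proof (cases "Y - X = {y}")
          case True
          have "card Y = card (Y \<inter> X) + card (Y - X)"
            using fY by (rule card_Int_Diff)
          hence "card (Y \<inter> X) = 3" using True c4 by simp
          hence "Y \<inter> X = X" using card_subset_eq[OF fX, of "Y \<inter> X"] c3 by simp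
          hence "Y = insert y X" using True y by blast
          thus False using inH[OF y] YI unfolding I_def by simp
        next
          case False
          then obtain y' where y': "y' \<in> Y - X" "y' \<noteq> y" using y by blast
          have "insert y X = insert y' X" using Hsp[OF inH[OF y] inH[OF y'(1)] c3] by blast
          thus False using y y' by blast
        qed
      qed
    qed
  qed
  have mat: "matroid E I"
    unfolding matroid_def
  proof (intro conjI allI impI)
    show "finite E" by (rule fin)
    show "\<forall>X\<in>I. X \<subseteq> E" unfolding I_def by auto
    have "Z \<in> I" using Z unfolding I_def by simp
    thus "I \<noteq> {}" by blast
  next
    fix X Y assume a: "X \<in> I \<and> Y \<subseteq> X"
    have fX: "finite X" using a fin unfolding I_def by (auto intro: finite_subset)
    have "card Y \<le> card X" using a fX card_mono by blast
    show "Y \<in> I"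
    proof (cases "card Y = 4")
      case True
      hence "card Y = card X" using a \<open>card Y \<le> card X\<close> unfolding I_def by simp
      hence "Y = X" using a fX card_subset_eq by blast
      thus ?thesis using a by simp
    next
      case False
      thus ?thesis using a \<open>card Y \<le> card X\<close> H4 unfolding I_def by auto
    qed
  next
    fix X Y assume "X \<in> I \<and> Y \<in> I \<and> card X < card Y"
    thus "\<exists>y\<in>Y - X. insert y X \<in> I" using exch by blast
  qed
  have ZI: "Z \<in> I" using Z unfolding I_def by simp
  have bases: "matroid_bases I = {B. B \<subseteq> E \<and> card B = 4 \<and> B \<notin> H}"
  proof (intro set_eqI iffI)
    fix B assume "B \<in> matroid_bases I"
    hence BI: "B \<in> I" and mx: "\<And>X. X \<in> I \<Longrightarrow> B \<subseteq> X \<Longrightarrow> X = B"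
      unfolding matroid_bases_def by auto
    have "card B = 4"
    proof (rule ccontr)
      assume "card B \<noteq> 4"
      hence "card B < card Z" using BI Z unfolding I_def by simp
      then obtain y where "y \<in> Z - B" "insert y B \<in> I" using exch[OF BI ZI] by blast
      thus False using mx[of "insert y B"] by blast
    qed
    thus "B \<in> {B. B \<subseteq> E \<and> card B = 4 \<and> B \<notin> H}" using BI unfolding I_def by simp
  next
    fix B assume B: "B \<in> {B. B \<subseteq> E \<and> card B = 4 \<and> B \<notin> H}"
    hence BI: "B \<in> I" unfolding I_def by simp
    have "X = B" if "X \<in> I" "B \<subseteq> X" for X
    proof -
      have fX: "finite X" using that fin unfolding I_def by (auto intro: finite_subset)
      have "card X \<le> card B" using that B unfolding I_def by simp
      thus ?thesis using that fX card_subset_eq card_mono by (metis le_antisym)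
    qed
    thus "B \<in> matroid_bases I" using BI unfolding matroid_bases_def by blast
  qed
  show ?thesis using mat bases by simp
qed

theorem proposition3p2:
  fixes n :: nat
  assumes "n \<ge> 4"
  shows "\<exists>\<I>. matroid {1..2*n} \<I> \<and>
           matroid_bases \<I> = {B. B \<subseteq> {1..2*n} \<and> card B = 4 \<and> B \<notin> vamos_H n}"
proof -
  let ?Z = "{1,3,5,7::nat}"
  have Zs: "?Z \<subseteq> {1..2*n}" using assms by auto
  have Zc: "card ?Z = 4" by simp
  have Zn: "?Z \<notin> vamos_H n"
  proof
    assume "?Z \<in> vamos_H n"
    then show False
    proof (cases rule: vH_cases)
      case (1 k)
      hence "(2::nat) \<in> ?Z" by blast
      thus False by simp
    next
      case (2 k)
      hence "2*k \<in> ?Z" by blast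
      hence "2*k=1 \<or> 2*k=3 \<or> 2*k=5 \<or> 2*k=(7::nat)" by simp
      thus False by presburger
    qed
  qed
  have "matroid {1..2*n} {X. X \<subseteq> {1..2*n} \<and> card X \<le> 4 \<and> X \<notin> vamos_H n} \<and>
    matroid_bases {X. X \<subseteq> {1..2*n} \<and> card X \<le> 4 \<and> X \<notin> vamos_H n}
     = {B. B \<subseteq> {1..2*n} \<and> card B = 4 \<and> B \<notin> vamos_H n}"
    apply (rule sparse_paving[where Z="?Z"])
         apply simp
        apply (erule vH_card)
       apply (erule (4) vH_dist)
      apply (rule Zs)
     apply (rule Zc)
    apply (rule Zn)
    done
  thus ?thesis by blast
qed

end
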